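(* Let $h,J\in\mathbb{R}$ with $J\neq 0$, let $\Gamma_{abs}>0$ and $\Gamma^z_{dph}>0$. Consider the two-qubit battery Hamiltonian $H_B$ and initial state $\rho_0$ described in the context, and for $\Gamma\ge 0$ let $\rho^{(\Gamma)}_t$ be the solution of the master equation $$\frac{d\rho}{dt}=-i[H_B,\rho]+\Gamma_{abs}\sum_{j=1}^{2}\Big(\sigma^+_j\rho\,\sigma^-_j-\tfrac12\{\sigma^-_j\sigma^+_j,\rho\}\Big)+\Gamma\sum_{j=1}^{2}\big(\sigma^z_j\rho\,\sigma^z_j-\rho\big),\qquad \rho(0)=\rho_0 .$$ Define the work gained $W_\Gamma(t)=\mathrm{Tr}(H_B\rho^{(\Gamma)}_t)-\mathrm{Tr}(H_B\rho_0)$. Then, in the transient regime, the work gained with local phase-flip noise exceeds the work gained without noise: there exists $t^*>0$ such that $W_{\Gamma^z_{dph}}(t)>W_0(t)$ for all $0<t<t^*$.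
   Context: Two qubits with computational basis $|00\rangle,|01\rangle,|10\rangle,|11\rangle$, where $\sigma^z|0\rangle=|0\rangle$, $\sigma^z|1\rangle=-|1\rangle$. $\sigma^x,\sigma^y,\sigma^z$ are the Pauli matrices, $\sigma^{\pm}=(\sigma^x\pm i\sigma^y)/2$, and $\sigma^a_1=\sigma^a\otimes I$, $\sigma^a_2=I\otimes\sigma^a$. The battery Hamiltonian (two-spin transverse Ising model) is, in the computational basis, $$H_B=\begin{pmatrix} h&0&0&J/4\\ 0&0&J/4&0\\ 0&J/4&0&0\\ J/4&0&0&-h\end{pmatrix}.$$ Set $e_0=-\sqrt{h^2+\tfrac{5J^2}{8}}$, $p=\frac{4(h+e_0)}{J}$, and let the initial state be $$\rho_0=\frac{1}{1+p^2}\begin{pmatrix} p^2&0&0&p\\ 0&0&0&0\\ 0&0&0&0\\ p&0&0&1\end{pmatrix}.$$ The terms with $\Gamma_{abs}$ model a local bosonic reservoir charging each spin (absorption channel); the terms with $\Gamma$ model local phase-flip (dephasing along $z$) noise on each spin; $\Gamma=0$ is the noiseless case. *)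

theory Defs
  imports "HOL-Analysis.Analysis" "HOL-Library.Numeral_Type"
begin

text \<open>Computational basis of one qubit: index 0 = |0>, index 1 = |1>.
Two qubits: index 2*a+b of type 4 corresponds to |ab> (qubit 1 = first tensor factor),
so indices 0,1,2,3 are |00>,|01>,|10>,|11>.\<close>

type_synonym mat2 = "complex^2^2"
type_synonym mat4 = "complex^4^4"

definition idx2 :: "2 \<Rightarrow> nat" where "idx2 i = nat (Rep_bit0 i)"
definition idx4 :: "4 \<Rightarrow> nat" where "idx4 i = nat (Rep_bit0 i)"

definition m2 :: "complex list list \<Rightarrow> mat2" where
  "m2 L = (\<chi> i j. L ! idx2 i ! idx2 j)"
definition m4 :: "complex list list \<Rightarrow> mat4" where
  "m4 L = (\<chi> i j. L ! idx4 i ! idx4 j)"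

definition kron :: "mat2 \<Rightarrow> mat2 \<Rightarrow> mat4" where
  "kron A B = (\<chi> i j. A $ of_nat (idx4 i div 2) $ of_nat (idx4 j div 2)
                       * B $ of_nat (idx4 i mod 2) $ of_nat (idx4 j mod 2))"

definition smat :: "complex \<Rightarrow> mat4 \<Rightarrow> mat4" where
  "smat c M = (\<chi> i j. c * M $ i $ j)"

definition smat2 :: "complex \<Rightarrow> mat2 \<Rightarrow> mat2" where
  "smat2 c M = (\<chi> i j. c * M $ i $ j)"

definition I2 :: mat2 where "I2 = mat 1"
definition sx :: mat2 where "sx = m2 [[0,1],[1,0]]"
definition sy :: mat2 where "sy = m2 [[0,-\<i>],[\<i>,0]]"
definition sz :: mat2 where "sz = m2 [[1,0],[0,-1]]"
definition splus :: mat2 where "splus = smat2 (1/2) (sx + smat2 \<i> sy)"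
definition sminus :: mat2 where "sminus = smat2 (1/2) (sx - smat2 \<i> sy)"

definition site :: "nat \<Rightarrow> mat2 \<Rightarrow> mat4" where
  "site j A = (if j = 1 then kron A I2 else kron I2 A)"

definition HB :: "real \<Rightarrow> real \<Rightarrow> mat4" where
  "HB h J = m4 [[h, 0, 0, J/4],
               [0, 0, J/4, 0],
               [0, J/4, 0, 0],
               [J/4, 0, 0, -h]]"

definition e0 :: "real \<Rightarrow> real \<Rightarrow> real" where
  "e0 h J = - sqrt (h\<^sup>2 + 5 * J\<^sup>2 / 8)"

definition pp :: "real \<Rightarrow> real \<Rightarrow> real" where
  "pp h J = 4 * (h + e0 h J) / J"

definition rho0 :: "real \<Rightarrow> real \<Rightarrow> mat4" where
  "rho0 h J = (let p = pp h J in
     smat (1 / (1 + p\<^sup>2)) (m4 [[p\<^sup>2, 0, 0, p], [0,0,0,0], [0,0,0,0], [p, 0, 0, 1]]))"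

definition comm :: "mat4 \<Rightarrow> mat4 \<Rightarrow> mat4" where "comm A B = A ** B - B ** A"
definition acomm :: "mat4 \<Rightarrow> mat4 \<Rightarrow> mat4" where "acomm A B = A ** B + B ** A"

definition lindblad :: "real \<Rightarrow> real \<Rightarrow> real \<Rightarrow> real \<Rightarrow> mat4 \<Rightarrow> mat4" where
  "lindblad h J Gabs G \<rho> =
     smat (-\<i>) (comm (HB h J) \<rho>)
     + Gabs *\<^sub>R (\<Sum>j\<in>{1,2::nat}. site j splus ** \<rho> ** site j sminus
                    - smat (1/2) (acomm (site j sminus ** site j splus) \<rho>))
     + G *\<^sub>R (\<Sum>j\<in>{1,2::nat}. site j sz ** \<rho> ** site j sz - \<rho>)"

definition is_solution :: "real \<Rightarrow> real \<Rightarrow> real \<Rightarrow> real \<Rightarrow> (real \<Rightarrow> mat4) \<Rightarrow> bool" where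
  "is_solution h J Gabs G \<rho> \<longleftrightarrow>
     \<rho> 0 = rho0 h J \<and>
     (\<forall>t\<ge>0. (\<rho> has_vector_derivative lindblad h J Gabs G (\<rho> t)) (at t within {0..}))"

definition work :: "real \<Rightarrow> real \<Rightarrow> mat4 \<Rightarrow> real" where
  "work h J \<rho> = Re (trace (HB h J ** \<rho>)) - Re (trace (HB h J ** rho0 h J))"

end

theory Submission
  imports Defs
begin
lemma idx4_vals[simp]: "idx4 0 = 0" "idx4 1 = 1" "idx4 2 = 2" "idx4 3 = 3"
  by (simp_all add: idx4_def bit0.Rep_numeral bit0.Rep_0 bit0.Rep_1)
lemma idx2_vals[simp]: "idx2 0 = 0" "idx2 1 = 1"
  by (simp_all add: idx2_def bit0.Rep_0 bit0.Rep_1)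
lemma four0: "(4::4) = 0"
  by (simp add: Rep_bit0_inject[symmetric] bit0.Rep_numeral bit0.Rep_0)
lemma two0: "(2::2) = 0"
  by (simp add: Rep_bit0_inject[symmetric] bit0.Rep_numeral bit0.Rep_0)
lemma UNIV4: "(UNIV::4 set) = {0,1,2,3}"
  using UNIV_4 four0 by auto
lemma UNIV2: "(UNIV::2 set) = {0,1}"
  using UNIV_2 two0 by auto
lemma sum4: "sum f (UNIV::4 set) = f 0 + f 1 + f 2 + f 3"
  unfolding UNIV4 by (simp add: ac_simps)
lemma sum2: "sum f (UNIV::2 set) = f 0 + f 1"
  unfolding UNIV2 by (simp add: ac_simps)

definition Dz :: "mat4 \<Rightarrow> mat4" where
  "Dz \<rho> = (\<Sum>j\<in>{1,2::nat}. site j sz ** \<rho> ** site j sz - \<rho>)"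

definition s1 :: "4 \<Rightarrow> complex" where "s1 i = (if i = 0 \<or> i = 1 then 1 else -1)"
definition s2 :: "4 \<Rightarrow> complex" where "s2 i = (if i = 0 \<or> i = 2 then 1 else -1)"

lemma all4: "(\<forall>i::4. P i) \<longleftrightarrow> P 0 \<and> P 1 \<and> P 2 \<and> P 3"
  by (metis UNIV4 UNIV_I insertE empty_iff)

lemma site1_sz: "site 1 sz $ i $ j = (if i = j then s1 i else 0)"
proof -
  have "\<forall>i j. site 1 sz $ i $ j = (if i = j then s1 i else 0)"
    unfolding all4 site_def kron_def sz_def I2_def m2_def s1_def
    by (simp add: mat_def)
  then show ?thesis by blast
qed

lemma site2_sz: "site 2 sz $ i $ j = (if i = j then s2 i else 0)"
proof -
  have "\<forall>i j. site 2 sz $ i $ j = (if i = j then s2 i else 0)"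
    unfolding all4 site_def kron_def sz_def I2_def m2_def s2_def
    by (simp add: mat_def)
  then show ?thesis by blast
qed

lemma diag_sandwich:
  assumes "\<And>i j. S $ i $ j = (if i = j then d i else 0)"
  shows "(S ** \<rho> ** S) $ i $ j = d i * \<rho> $ i $ j * d j"
  unfolding matrix_matrix_mult_def vec_lambda_beta assms
  by (simp add: if_distrib if_distribR cong: if_cong)

lemma Dz_entry: "Dz \<rho> $ i $ j = (s1 i * s1 j + s2 i * s2 j - 2) * \<rho> $ i $ j"
  unfolding Dz_def
  using diag_sandwich[OF site1_sz, of \<rho> i j] diag_sandwich[OF site2_sz, of \<rho> i j]
  by (simp add: algebra_simps)

lemma HB_entries: "HB h J $ 0 $ 0 = h" "HB h J $ 3 $ 3 = -h" "HB h J $ 1 $ 1 = 0" "HB h J $ 2 $ 2 = 0"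
  "HB h J $ 0 $ 3 = J/4" "HB h J $ 3 $ 0 = J/4" "HB h J $ 1 $ 2 = J/4" "HB h J $ 2 $ 1 = J/4"
  "HB h J $ 0 $ 1 = 0" "HB h J $ 0 $ 2 = 0" "HB h J $ 1 $ 0 = 0" "HB h J $ 1 $ 3 = 0"
  "HB h J $ 2 $ 0 = 0" "HB h J $ 2 $ 3 = 0" "HB h J $ 3 $ 1 = 0" "HB h J $ 3 $ 2 = 0"
  by (simp_all add: HB_def m4_def)

lemma s_vals: "s1 0 = 1" "s1 1 = 1" "s1 2 = -1" "s1 3 = -1" "s2 0 = 1" "s2 1 = -1" "s2 2 = 1" "s2 3 = -1"
  by (simp_all add: s1_def s2_def)

lemma trace_Dz: "trace (HB h J ** Dz \<rho>) = - of_real J * (\<rho>$0$3 + \<rho>$3$0 + \<rho>$1$2 + \<rho>$2$1)"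
  unfolding trace_def matrix_matrix_mult_def
  by (simp add: sum4 Dz_entry s_vals HB_entries algebra_simps)

lemma rho0_entries: "rho0 h J $ 0 $ 3 = of_real (pp h J / (1 + (pp h J)^2))"
  "rho0 h J $ 3 $ 0 = of_real (pp h J / (1 + (pp h J)^2))"
  "rho0 h J $ 1 $ 2 = 0" "rho0 h J $ 2 $ 1 = 0"
  by (simp_all add: rho0_def Let_def m4_def smat_def)

lemma Dz_val: "Re (trace (HB h J ** Dz (rho0 h J))) = -2 * J * pp h J / (1 + (pp h J)^2)"
  unfolding trace_Dz rho0_entries by simp
definition LH :: "real \<Rightarrow> real \<Rightarrow> mat4 \<Rightarrow> real" where
  "LH h J M = Re (trace (HB h J ** M))"

lemma LH_bl: "bounded_linear (LH h J)"
proof -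
  have "linear (LH h J)"
  proof (rule linearI)
    fix x y :: mat4
    show "LH h J (x + y) = LH h J x + LH h J y"
      unfolding LH_def trace_def matrix_matrix_mult_def
      by (simp add: distrib_left sum.distrib)
  next
    fix c :: real and x :: mat4
    show "LH h J (c *\<^sub>R x) = c *\<^sub>R LH h J x"
      unfolding LH_def trace_def matrix_matrix_mult_def
      by (simp add: sum_distrib_left mult.left_commute)
  qed
  then show ?thesis by (simp add: linear_conv_bounded_linear)
qed

lemma lind_split: "lindblad h J Gabs G \<rho> = lindblad h J Gabs 0 \<rho> + G *\<^sub>R Dz \<rho>"
  unfolding lindblad_def Dz_def by simp

lemma Jp_neg: assumes "J \<noteq> 0" shows "J * pp h J < 0"
proof -
  have "h\<^sup>2 < h\<^sup>2 + 5 * J\<^sup>2 / 8" using assms by simp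
  then have "sqrt (h\<^sup>2) < sqrt (h\<^sup>2 + 5 * J\<^sup>2 / 8)" by (rule real_sqrt_less_mono)
  then have "h < sqrt (h\<^sup>2 + 5 * J\<^sup>2 / 8)" by (metis abs_ge_self le_less_trans real_sqrt_abs)
  then show ?thesis using assms unfolding pp_def e0_def by simp
qed

theorem theorem1:
  fixes h J Gabs Gdph :: real and \<rho>N \<rho>0 :: "real \<Rightarrow> mat4"
  assumes "J \<noteq> 0" and "Gabs > 0" and "Gdph > 0"
    and "is_solution h J Gabs Gdph \<rho>N"
    and "is_solution h J Gabs 0 \<rho>0"
  shows "\<exists>tstar>0. \<forall>t. 0 < t \<and> t < tstar \<longrightarrow> work h J (\<rho>N t) > work h J (\<rho>0 t)"
proof -
  define f where "f t = LH h J (\<rho>N t) - LH h J (\<rho>0 t)" for t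
  have N0: "\<rho>N 0 = rho0 h J" and Z0: "\<rho>0 0 = rho0 h J"
    using assms(4,5) unfolding is_solution_def by auto
  have dN: "(\<rho>N has_vector_derivative lindblad h J Gabs Gdph (rho0 h J)) (at 0 within {0..})"
    using assms(4) N0 unfolding is_solution_def by force
  have dZ: "(\<rho>0 has_vector_derivative lindblad h J Gabs 0 (rho0 h J)) (at 0 within {0..})"
    using assms(5) Z0 unfolding is_solution_def by force
  have "(f has_vector_derivative
      (LH h J (lindblad h J Gabs Gdph (rho0 h J)) - LH h J (lindblad h J Gabs 0 (rho0 h J))))
      (at 0 within {0..})"
    unfolding f_def
    by (intro has_vector_derivative_diff bounded_linear.has_vector_derivative[OF LH_bl] dN dZ)
  moreover have "LH h J (lindblad h J Gabs Gdph (rho0 h J)) - LH h J (lindblad h J Gabs 0 (rho0 h J))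
      = Gdph * (-2 * J * pp h J / (1 + (pp h J)^2))"
    apply (subst lind_split[of _ _ _ Gdph])
    using Dz_val[of h J] bounded_linear.linear[OF LH_bl[of h J]]
    by (simp add: linear_add linear_scale LH_def[symmetric])
  moreover have "Gdph * (-2 * J * pp h J / (1 + (pp h J)^2)) > 0"
  proof -
    have "J * pp h J < 0" using Jp_neg[OF assms(1)] .
    then have a: "0 < -2 * J * pp h J" by simp
    have b: "0 < 1 + (pp h J)^2" by (simp add: add_pos_nonneg)
    show ?thesis using mult_pos_pos[OF assms(3) divide_pos_pos[OF a b]] .
  qed
  ultimately obtain d where d: "d > 0" "\<And>t. t > 0 \<Longrightarrow> t < d \<Longrightarrow> f 0 < f t"
    using has_real_derivative_pos_inc_right[of f _ 0 "{0..}"]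
    by (metis has_real_derivative_iff_has_vector_derivative add_0 atLeast_iff less_eq_real_def)
  have "f 0 = 0" unfolding f_def N0 Z0 by simp
  then show ?thesis using d unfolding work_def f_def LH_def by (intro exI[of _ d]) auto
qed
end
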